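(* Let $(G,c)$ be an edge-colored DAG in which all edges have the same color, and suppose $G$ has at least two edges. If $(H,c')$ is any edge-colored DAG on the same vertex set in which all edges have the same color and $\mathcal M(H,c')=\mathcal M(G,c)$, then $H=G$.
   Context: An edge-colored DAG $(G,c)$, $G=(V,E)$, has a coloring of $V\sqcup E$ in which every vertex forms its own color class (edge colors distinct from vertex colors). $\mathcal M(G,c)$ is the set of $(I-\Lambda)^{-T}\Omega(I-\Lambda)^{-1}$ with $\Omega=\mathrm{diag}(\omega_i)$, $\omega_i>0$ arbitrary, $\lambda_{ij}=0$ for $ij\notin E$, and $\lambda_{ij}=\lambda_{kl}$ whenever $c(ij)=c(kl)$; with a single edge color this means all $\lambda_{ij}$, $ij\in E$, equal a common real number. *)

theory Defs
  imports "HOL-Analysis.Analysis"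
begin

text \<open>A DAG on the (finite) vertex set given by the type 'n: an acyclic edge relation.
  Edge (i,j) means i -> j. Acyclicity excludes self-loops.\<close>
definition is_dag :: "('n::finite \<times> 'n) set \<Rightarrow> bool" where
  "is_dag E \<longleftrightarrow> acyclic E"

definition diag_mat :: "('n::finite \<Rightarrow> real) \<Rightarrow> real^'n^'n" where
  "diag_mat w = (\<chi> i j. if i = j then w i else 0)"

text \<open>Every vertex forms its own color class,
  so the error variances omega_i are unrestricted positive reals; edge coloring c
  imposes equality of lambda on equally colored edges.\<close>
definition colored_model ::
    "('n::finite \<times> 'n) set \<Rightarrow> ('n \<times> 'n \<Rightarrow> 'c) \<Rightarrow> (real^'n^'n) set" where
  "colored_model E c =
    {transpose (matrix_inv (mat 1 - L)) ** diag_mat w ** matrix_inv (mat 1 - L) | L w.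
       (\<forall>i. w i > 0) \<and>
       (\<forall>i j. (i, j) \<notin> E \<longrightarrow> L $ i $ j = 0) \<and>
       (\<forall>e\<in>E. \<forall>f\<in>E. c e = c f \<longrightarrow> L $ fst e $ snd e = L $ fst f $ snd f)}"

end

theory Submission
  imports Defs
begin

definition adj :: "('n::finite \<times> 'n) set \<Rightarrow> real^'n^'n" where
  "adj G = (\<chi> i j. if (i,j) \<in> G then 1 else 0)"

definition TT :: "('n::finite \<times> 'n) set \<Rightarrow> real \<Rightarrow> real^'n^'n" where
  "TT G l = mat 1 - l *\<^sub>R adj G"

lemma TT_nth[simp]: "TT G l $ i $ j = (if i = j then 1 else 0) - (if (i,j) \<in> G then l else 0)"
  by (simp add: TT_def adj_def mat_def)

lemma transpose_TT: "transpose (TT G l) = TT (G\<inverse>) l"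
  by (simp add: vec_eq_iff transpose_def)

lemma TT_inj0:
  fixes G :: "('n::finite \<times> 'n) set"
  assumes ac: "acyclic G" and x: "TT G l *v x = 0"
  shows "x = 0"
proof -
  have fin: "finite (G\<inverse>)" by simp
  have wf: "wf (G\<inverse>)" using finite_acyclic_wf[OF fin] ac by (simp add: acyclic_converse)
  have "\<forall>i. x $ i = 0"
  proof
    fix i show "x $ i = 0"
    proof (induction i rule: wf_induct[OF wf])
      case (1 i)
      have hyp: "\<And>j. (i,j) \<in> G \<Longrightarrow> x $ j = 0" using 1 by auto
      have eq: "\<And>j. ((if i = j then 1 else 0) - (if (i, j) \<in> G then l else 0)) * x $ j = (if i = j then x $ j else 0)"
        using hyp by auto
      have "(TT G l *v x) $ i = x $ i"
        unfolding matrix_vector_mult_def by (simp add: eq)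
      then show ?case using x by simp
    qed
  qed
  then show ?thesis by (simp add: vec_eq_iff)
qed

lemma TT_invertible:
  fixes G :: "('n::finite \<times> 'n) set"
  assumes "acyclic G" shows "invertible (TT G l)"
proof -
  have "\<exists>B. B ** TT G l = mat 1"
    using matrix_left_invertible_ker TT_inj0[OF assms] by blast
  then show ?thesis using invertible_left_inverse by blast
qed

lemma matrix_inv_props:
  assumes "invertible (A::real^'n::finite^'n)"
  shows "A ** matrix_inv A = mat 1" "matrix_inv A ** A = mat 1"
proof -
  have "\<exists>A'. A ** A' = mat 1 \<and> A' ** A = mat 1" using assms invertible_def by blast
  then have "A ** matrix_inv A = mat 1 \<and> matrix_inv A ** A = mat 1"
    unfolding matrix_inv_def by (rule someI_ex)
  then show "A ** matrix_inv A = mat 1" "matrix_inv A ** A = mat 1" by auto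
qed

definition Q :: "real^'n::finite^'n \<Rightarrow> real^'n \<Rightarrow> real^'n \<Rightarrow> real" where
  "Q S x y = inner x (S *v y)"

lemma QE: "(transpose A ** S ** B) $ i $ j = Q S (column i A) (column j B)"
proof -
  have "(\<Sum>m\<in>UNIV. (\<Sum>k\<in>UNIV. A $ k $ i * S $ k $ m) * B $ m $ j)
      = (\<Sum>m\<in>UNIV. \<Sum>k\<in>UNIV. A $ k $ i * (S $ k $ m * B $ m $ j))"
    by (simp add: sum_distrib_right mult.assoc)
  also have "\<dots> = (\<Sum>k\<in>UNIV. \<Sum>m\<in>UNIV. A $ k $ i * (S $ k $ m * B $ m $ j))"
    by (rule sum.swap)
  also have "\<dots> = (\<Sum>k\<in>UNIV. A $ k $ i * (\<Sum>m\<in>UNIV. S $ k $ m * B $ m $ j))"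
    by (simp add: sum_distrib_left)
  finally show ?thesis
    unfolding Q_def matrix_matrix_mult_def transpose_def column_def inner_vec_def matrix_vector_mult_def
    by simp
qed

lemma Q_axis: "Q S (axis i 1) (axis j 1) = S $ i $ j"
  unfolding Q_def by (simp add: matrix_vector_mult_basis inner_axis' column_def)

lemma Q_add1[simp]: "Q S (x + y) z = Q S x z + Q S y z" by (simp add: Q_def inner_add_left)
lemma Q_add2[simp]: "Q S z (x + y) = Q S z x + Q S z y" by (simp add: Q_def inner_add_right matrix_vector_right_distrib)
lemma Q_diff1[simp]: "Q S (x - y) z = Q S x z - Q S y z" by (simp add: Q_def inner_diff_left)
lemma Q_diff2[simp]: "Q S z (x - y) = Q S z x - Q S z y" by (simp add: Q_def inner_diff_right matrix_vector_mult_diff_distrib)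
lemma Q_scale1[simp]: "Q S (c *\<^sub>R x) z = c * Q S x z" by (simp add: Q_def)
lemma Q_scale2[simp]: "Q S z (c *\<^sub>R x) = c * Q S z x" by (simp add: Q_def matrix_vector_mult_scaleR)

definition rr :: "('n::finite \<times> 'n) set \<Rightarrow> real \<Rightarrow> 'n \<Rightarrow> real^'n" where
  "rr G l i = column i (TT G l)"

lemma rr_nth[simp]: "rr G l i $ k = (if k = i then 1 else 0) - (if (k,i) \<in> G then l else 0)"
  by (simp add: rr_def column_def)

definition inM :: "('n::finite \<times> 'n) set \<Rightarrow> real^'n^'n \<Rightarrow> real \<Rightarrow> ('n \<Rightarrow> real) \<Rightarrow> bool" where
  "inM G S l w \<longleftrightarrow> (\<forall>i. 0 < w i) \<and> transpose (TT G l) ** S ** TT G l = diag_mat w"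

definition Mod :: "('n::finite \<times> 'n) set \<Rightarrow> (real^'n^'n) set" where
  "Mod G = {S. \<exists>l w. inM G S l w}"

lemma inM_iff: "inM G S l w \<longleftrightarrow> (\<forall>i. 0 < w i) \<and>
   (\<forall>i j. Q S (rr G l i) (rr G l j) = (if i = j then w i else 0))"
  unfolding inM_def by (simp add: vec_eq_iff QE diag_mat_def rr_def)


lemma transpose_inv_mul:
  assumes "invertible (A::real^'n::finite^'n)"
  shows "transpose A ** transpose (matrix_inv A) = mat 1"
  by (metis matrix_transpose_mul matrix_inv_props(2)[OF assms] transpose_mat)

lemma exist_elem:
  fixes G :: "('n::finite \<times> 'n) set"
  assumes ac: "acyclic G" and w: "\<forall>i. 0 < w i"
  shows "inM G (transpose (matrix_inv (TT G l)) ** diag_mat w ** matrix_inv (TT G l)) l w"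
proof -
  let ?T = "TT G l" let ?Ti = "matrix_inv ?T"
  have inv: "invertible ?T" using TT_invertible[OF ac] .
  have "transpose ?T ** (transpose ?Ti ** diag_mat w ** ?Ti) ** ?T
      = ((transpose ?T ** transpose ?Ti) ** diag_mat w) ** (?Ti ** ?T)"
    by (simp add: matrix_mul_assoc)
  also have "\<dots> = diag_mat w" using transpose_inv_mul[OF inv] matrix_inv_props[OF inv] by simp
  finally show ?thesis unfolding inM_def using w by simp
qed

lemma diag_mul: "diag_mat w *v z = (\<chi> i. w i * z $ i)"
  by (simp add: vec_eq_iff diag_mat_def matrix_vector_mult_def if_distrib if_distribR cong: if_cong)

lemma TT_tinj:
  fixes G :: "('n::finite \<times> 'n) set"
  assumes "acyclic G" and "transpose (TT G l) *v x = transpose (TT G l) *v y"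
  shows "x = y"
proof -
  have "TT (G\<inverse>) l *v (x - y) = 0" using assms(2)
    by (simp add: transpose_TT[symmetric] matrix_vector_mult_diff_distrib del: transpose_matrix_vector)
  then have "x - y = 0" using TT_inj0[of "G\<inverse>" l "x - y"] assms(1) by (simp add: acyclic_converse)
  then show ?thesis by simp
qed

lemma key_mul:
  assumes "inM G S l w"
  shows "transpose (TT G l) *v (S *v (TT G l *v z)) = (\<chi> i. w i * z $ i)"
  using assms unfolding inM_def
  by (simp add: matrix_vector_mul_assoc matrix_mul_assoc diag_mul del: transpose_matrix_vector)

lemma S_inj:
  fixes G :: "('n::finite \<times> 'n) set"
  assumes ac: "acyclic G" and m: "inM G S l w" and x: "S *v x = 0"
  shows "x = 0"
proof -
  let ?T = "TT G l"
  have inv: "invertible ?T" using TT_invertible[OF ac] .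
  define z where "z = matrix_inv ?T *v x"
  have xz: "x = ?T *v z" unfolding z_def
    by (simp add: matrix_vector_mul_assoc matrix_inv_props(1)[OF inv])
  have "(\<chi> i. w i * z $ i) = 0" using key_mul[OF m, of z] x xz
    by (simp del: transpose_matrix_vector)
  then have "\<forall>i. w i * z $ i = 0" by (simp add: vec_eq_iff)
  moreover have "\<forall>i. 0 < w i" using m unfolding inM_def by blast
  ultimately have "z = 0" by (metis vec_eq_iff zero_index mult_eq_0_iff order_less_irrefl)
  then show ?thesis using xz by simp
qed

lemma S_inj2:
  fixes G :: "('n::finite \<times> 'n) set"
  assumes ac: "acyclic G" and m: "inM G S l w" and x: "S *v x = S *v y"
  shows "x = y"
  using S_inj[OF ac m, of "x - y"] x by (simp add: matrix_vector_mult_diff_distrib)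

lemma rr_TT: "rr G l i = TT G l *v axis i 1"
  by (simp add: rr_def matrix_vector_mult_basis)

lemma SL:
  fixes G :: "('n::finite \<times> 'n) set"
  assumes ac: "acyclic G" and m: "inM G S l w" and sink: "\<forall>j. (s,j) \<notin> G"
  shows "S *v rr G l s = w s *\<^sub>R axis s 1"
proof -
  let ?T = "TT G l"
  have k: "transpose ?T *v (S *v (?T *v axis s 1)) = (\<chi> i. w i * axis s 1 $ i)"
    by (rule key_mul[OF m])
  have e: "(\<chi> i. w i * axis s (1::real) $ i) = w s *\<^sub>R axis s 1"
    by (simp add: vec_eq_iff axis_def)
  have 1: "transpose ?T *v (S *v rr G l s) = w s *\<^sub>R axis s 1"
    using k e by (simp only: rr_TT)
  have r: "row s ?T = axis s 1" using sink by (simp add: row_def vec_eq_iff axis_def)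
  have 2: "transpose ?T *v (w s *\<^sub>R axis s 1) = w s *\<^sub>R axis s 1"
    by (simp only: matrix_vector_mult_scaleR matrix_vector_mult_basis column_transpose r)
  show ?thesis using TT_tinj[OF ac] 1 2 by metis
qed

definition yv :: "('n::finite \<times> 'n) set \<Rightarrow> real \<Rightarrow> ('n \<Rightarrow> real) \<Rightarrow> 'n \<Rightarrow> real^'n" where
  "yv G l w s = TT G l *v (\<chi> i. TT G l $ s $ i / w i)"

lemma REG:
  fixes G :: "('n::finite \<times> 'n) set"
  assumes ac: "acyclic G" and m: "inM G S l w"
  shows "S *v yv G l w s = axis s 1"
proof -
  let ?T = "TT G l"
  have wpos: "\<forall>i. w i \<noteq> 0" using m inM_def by (metis order_less_irrefl)
  have k: "transpose ?T *v (S *v yv G l w s) = (\<chi> i. w i * (\<chi> i. ?T $ s $ i / w i) $ i)"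
    unfolding yv_def by (rule key_mul[OF m])
  have e: "(\<chi> i. w i * (\<chi> i. ?T $ s $ i / w i) $ i) = row s ?T"
    using wpos by (simp add: vec_eq_iff row_def)
  have 2: "transpose ?T *v axis s 1 = row s ?T"
    by (simp only: matrix_vector_mult_basis column_transpose)
  show ?thesis using TT_tinj[OF ac] k e 2 by metis
qed

lemma inM_transpose:
  assumes "inM G S l w" shows "inM G (transpose S) l w"
proof -
  have "transpose (transpose (TT G l) ** S ** TT G l) = transpose (TT G l) ** transpose S ** TT G l"
    by (simp add: matrix_transpose_mul matrix_mul_assoc)
  moreover have "transpose (diag_mat w) = diag_mat w" by (simp add: vec_eq_iff transpose_def diag_mat_def)
  ultimately show ?thesis using assms unfolding inM_def by metis
qed


definition iso :: "'n::finite \<Rightarrow> real \<Rightarrow> real^'n^'n \<Rightarrow> real^'n^'n" where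
  "iso s t S = (\<chi> i j. if i = s \<or> j = s then (if i = j then t else 0) else S $ i $ j)"

lemma iso_nth[simp]: "iso s t S $ i $ j = (if i = s \<or> j = s then (if i = j then t else 0) else S $ i $ j)"
  by (simp add: iso_def)

lemma Q_sum: "Q S x y = (\<Sum>k\<in>UNIV. x $ k * (\<Sum>m\<in>UNIV. S $ k $ m * y $ m))"
  by (simp add: Q_def inner_vec_def matrix_vector_mult_def)

lemma Q_iso0:
  assumes "x $ s = 0" "y $ s = 0"
  shows "Q (iso s t S) x y = Q S x y"
  unfolding Q_sum
proof (rule sum.cong[OF refl])
  fix k
  show "x $ k * (\<Sum>m\<in>UNIV. iso s t S $ k $ m * y $ m) = x $ k * (\<Sum>m\<in>UNIV. S $ k $ m * y $ m)"
  proof (cases "k = s")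
    case True then show ?thesis using assms by simp
  next
    case False
    have "(\<Sum>m\<in>UNIV. iso s t S $ k $ m * y $ m) = (\<Sum>m\<in>UNIV. S $ k $ m * y $ m)"
      by (rule sum.cong[OF refl]) (use False assms in auto)
    then show ?thesis by simp
  qed
qed

lemma Q_iso1: "Q (iso s t S) (axis s 1) y = t * y $ s"
proof -
  have e: "\<And>m. iso s t S $ s $ m * y $ m = (if m = s then t * y $ s else 0)" by simp
  have "Q (iso s t S) (axis s 1) y = (iso s t S *v y) $ s"
    by (simp add: Q_def inner_axis')
  also have "\<dots> = (\<Sum>m\<in>UNIV. iso s t S $ s $ m * y $ m)" by (simp add: matrix_vector_mult_def)
  also have "\<dots> = t * y $ s" by (simp only: e) simp
  finally show ?thesis .
qed

lemma Q_iso2: "Q (iso s t S) x (axis s 1) = t * x $ s"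
proof -
  have c: "iso s t S *v axis s 1 = t *\<^sub>R axis s 1"
    by (simp only: matrix_vector_mult_basis) (simp add: column_def vec_eq_iff axis_def)
  show ?thesis by (simp add: Q_def c inner_axis)
qed

definition Nx :: "'n::finite \<Rightarrow> real^'n \<Rightarrow> real^'n^'n" where
  "Nx s v = (\<chi> i. if i = s then axis s 1 + v else axis i 1)"

lemma inner_mv: "inner x (A *v u) = inner (transpose A *v x) (u::real^'n::finite)"
proof -
  have "(\<Sum>i\<in>UNIV. x $ i * (\<Sum>j\<in>UNIV. A $ i $ j * u $ j))
      = (\<Sum>i\<in>UNIV. \<Sum>j\<in>UNIV. x $ i * A $ i $ j * u $ j)"
    by (simp add: sum_distrib_left mult.assoc)
  also have "\<dots> = (\<Sum>j\<in>UNIV. \<Sum>i\<in>UNIV. x $ i * A $ i $ j * u $ j)" by (rule sum.swap)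
  also have "\<dots> = (\<Sum>j\<in>UNIV. (\<Sum>i\<in>UNIV. A $ i $ j * x $ i) * u $ j)"
    by (simp add: sum_distrib_right sum_distrib_left mult_ac)
  finally show ?thesis
    by (simp add: inner_vec_def matrix_vector_mult_def transpose_def mult.commute del: transpose_matrix_vector)
qed

lemma QN: "Q (A ** S ** transpose B) x y = Q S (transpose A *v x) (transpose B *v y)"
  unfolding Q_def
  by (simp add: matrix_vector_mul_assoc[symmetric] inner_mv del: transpose_matrix_vector)

lemma tNx: "transpose (Nx s v) *v x = x + x $ s *\<^sub>R v"
proof -
  have "\<And>j. (\<Sum>i\<in>UNIV. Nx s v $ i $ j * x $ i) = x $ j + x $ s * v $ j"
  proof -
    fix j
    have e: "\<And>i. Nx s v $ i $ j * x $ i = (if i = j then x $ i else 0) + (if i = s then x $ s * v $ j else 0)"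
      by (simp add: Nx_def axis_def algebra_simps)
    show "(\<Sum>i\<in>UNIV. Nx s v $ i $ j * x $ i) = x $ j + x $ s * v $ j"
      by (simp only: e sum.distrib) simp
  qed
  then show ?thesis
    by (simp add: vec_eq_iff transpose_def matrix_vector_mult_def del: transpose_matrix_vector)
qed

lemma Nx_entry:
  assumes "i \<noteq> s" "j \<noteq> s"
  shows "(Nx s v ** S ** transpose (Nx s v)) $ i $ j = S $ i $ j"
proof -
  have "(Nx s v ** S ** transpose (Nx s v)) = transpose (transpose (Nx s v)) ** S ** transpose (Nx s v)"
    by simp
  then have "(Nx s v ** S ** transpose (Nx s v)) $ i $ j
     = Q S (column i (transpose (Nx s v))) (column j (transpose (Nx s v)))"
    by (metis QE)
  also have "\<dots> = Q S (axis i 1) (axis j 1)"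
    using assms by (simp add: column_def transpose_def Nx_def vec_eq_iff)
  finally show ?thesis by (simp add: Q_axis)
qed

lemma iso_Nx: "iso s t (Nx s v ** S ** transpose (Nx s v)) = iso s t S"
  by (simp add: vec_eq_iff Nx_entry)

lemma iso_iso: "iso s t (iso s z S) = iso s t S"
  by (simp add: vec_eq_iff)

lemma iso_isolated:
  fixes G :: "('n::finite \<times> 'n) set"
  assumes ac: "acyclic G" and m: "inM G S l w"
    and o: "\<forall>j. (s,j) \<notin> G" and i: "\<forall>j. (j,s) \<notin> G"
  shows "iso s (w s) S = S"
proof -
  have r: "rr G l s = axis s 1" using i by (simp add: vec_eq_iff axis_def)
  have c1: "S *v axis s 1 = w s *\<^sub>R axis s 1" using SL[OF ac m o] r by simp
  have c2: "transpose S *v axis s 1 = w s *\<^sub>R axis s 1"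
    using SL[OF ac inM_transpose[OF m] o] r by simp
  have a: "\<And>j. S $ j $ s = (if j = s then w s else 0)"
  proof -
    fix j have "(S *v axis s 1) $ j = S $ j $ s"
      by (simp add: matrix_vector_mult_basis column_def)
    then show "S $ j $ s = (if j = s then w s else 0)" using c1 by (cases "j = s") (simp_all add: axis_def)
  qed
  have b: "\<And>j. S $ s $ j = (if j = s then w s else 0)"
  proof -
    fix j have "(transpose S *v axis s 1) $ j = S $ s $ j"
      by (simp only: matrix_vector_mult_basis column_transpose) (simp add: row_def)
    then show "S $ s $ j = (if j = s then w s else 0)" using c2 by (cases "j = s") (simp_all add: axis_def)
  qed
  show ?thesis using a b by (auto simp: vec_eq_iff)
qed


lemma acyc_irrefl: "acyclic G \<Longrightarrow> (x,x) \<notin> G"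
  unfolding acyclic_def by blast

lemma RS:
  fixes G :: "('n::finite \<times> 'n) set"
  assumes m: "inM G S l w" and sink: "\<forall>j. (s,j) \<notin> G" and t: "0 < t"
  shows "inM {p\<in>G. snd p \<noteq> s} (iso s t S) l (w(s:=t))"
proof -
  let ?G' = "{p\<in>G. snd p \<noteq> s}"
  have hQ: "\<forall>i j. Q S (rr G l i) (rr G l j) = (if i = j then w i else 0)"
    and wpos: "\<forall>i. 0 < w i" using m inM_iff by blast+
  have r1: "\<And>i. i \<noteq> s \<Longrightarrow> rr ?G' l i = rr G l i" by (auto simp: vec_eq_iff)
  have r2: "rr ?G' l s = axis s 1" by (auto simp: vec_eq_iff axis_def)
  have z: "\<And>i. i \<noteq> s \<Longrightarrow> rr G l i $ s = 0" using sink by simp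
  show ?thesis unfolding inM_iff
  proof (intro conjI allI)
    fix i show "0 < (w(s:=t)) i" using wpos t by simp
  next
    fix i j
    show "Q (iso s t S) (rr ?G' l i) (rr ?G' l j) = (if i = j then (w(s:=t)) i else 0)"
    proof (cases "i = s")
      case True then show ?thesis using sink by (simp add: r2 Q_iso1)
    next
      case False
      show ?thesis
      proof (cases "j = s")
        case True then show ?thesis using False sink by (simp add: r2 Q_iso2)
      next
        case False2: False
        show ?thesis using Q_iso0[of "rr G l i" s "rr G l j" t S] z r1 False False2 hQ by simp
      qed
    qed
  qed
qed

lemma RSp:
  fixes G :: "('n::finite \<times> 'n) set"
  assumes m: "inM G S l w" and ps: "\<forall>j. (j,s) \<notin> G" and cs: "\<forall>j. (s,j) \<in> G \<longleftrightarrow> j = c"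
    and pc: "\<forall>j. (j,c) \<in> G \<longleftrightarrow> j = s" and t: "0 < t"
  shows "inM (G - {(s,c)}) (iso s t S) l (w(s:=t, c := w c + l^2 * w s))"
proof -
  let ?G' = "G - {(s,c)}"
  have sc: "s \<noteq> c" using ps cs by blast
  have hQ: "\<forall>i j. Q S (rr G l i) (rr G l j) = (if i = j then w i else 0)"
    and wpos: "\<forall>i. 0 < w i" using m inM_iff by blast+
  have r1: "\<And>i. i \<noteq> c \<Longrightarrow> rr ?G' l i = rr G l i" by (auto simp: vec_eq_iff)
  have rs: "rr ?G' l s = axis s 1" using ps by (auto simp: vec_eq_iff axis_def)
  have rc: "rr ?G' l c = rr G l c + l *\<^sub>R rr G l s" using ps pc sc by (auto simp: vec_eq_iff)
  have z: "\<And>i. i \<noteq> s \<Longrightarrow> rr ?G' l i $ s = 0" using cs by simp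
  have zs: "\<And>j. rr ?G' l j $ s = (if j = s then 1 else 0)" using cs ps by simp
  show ?thesis unfolding inM_iff
  proof (intro conjI allI)
    fix i
    have "0 < w c + l^2 * w s" using wpos by (simp add: add_pos_nonneg less_imp_le)
    then show "0 < (w(s:=t, c := w c + l^2 * w s)) i" using wpos t by simp
  next
    fix i j
    show "Q (iso s t S) (rr ?G' l i) (rr ?G' l j) = (if i = j then (w(s:=t, c := w c + l^2 * w s)) i else 0)"
    proof (cases "i = s")
      case True then show ?thesis using zs sc by (simp add: rs Q_iso1)
    next
      case False
      show ?thesis
      proof (cases "j = s")
        case True then show ?thesis using False zs cs by (simp add: rs Q_iso2)
      next
        case False2: False
        have "Q (iso s t S) (rr ?G' l i) (rr ?G' l j) = Q S (rr ?G' l i) (rr ?G' l j)"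
          using Q_iso0 z False False2 by blast
        also have "\<dots> = (if i = j then (w(s:=t, c := w c + l^2 * w s)) i else 0)"
        proof (cases "i = c")
          case True
          show ?thesis
          proof (cases "j = c")
            case True2: True
            show ?thesis using True True2 rc hQ sc by (simp add: power2_eq_square)
          next
            case False3: False
            show ?thesis using True False3 False2 rc r1 hQ sc by simp
          qed
        next
          case False4: False
          show ?thesis
          proof (cases "j = c")
            case True2: True
            show ?thesis using False4 True2 False rc r1 hQ sc by simp
          next
            case False3: False
            show ?thesis using False4 False3 False False2 r1 hQ by simp
          qed
        qed
        finally show ?thesis .
      qed
    qed
  qed
qed

lemma ES:
  fixes G :: "('n::finite \<times> 'n) set"
  assumes ac: "acyclic G" and sink: "\<forall>j. (s,j) \<notin> G" and m: "inM {p\<in>G. snd p \<noteq> s} S l w"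
  shows "inM G (Nx s (l *\<^sub>R (\<chi> k. if (k,s)\<in>G then 1 else 0)) ** S ** transpose (Nx s (l *\<^sub>R (\<chi> k. if (k,s)\<in>G then 1 else 0)))) l w"
proof -
  let ?G' = "{p\<in>G. snd p \<noteq> s}"
  let ?N = "Nx s (l *\<^sub>R (\<chi> k. if (k,s)\<in>G then 1 else 0))"
  have ss: "(s,s) \<notin> G" using acyc_irrefl[OF ac] .
  have hQ: "\<forall>i j. Q S (rr ?G' l i) (rr ?G' l j) = (if i = j then w i else 0)"
    and wpos: "\<forall>i. 0 < w i" using m inM_iff by blast+
  have t: "\<And>i. transpose ?N *v rr G l i = rr ?G' l i"
    unfolding tNx using sink ss by (auto simp: vec_eq_iff)
  show ?thesis unfolding inM_iff QN t using hQ wpos by simp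
qed

lemma ESp:
  fixes G :: "('n::finite \<times> 'n) set"
  assumes ps: "\<forall>j. (j,s) \<notin> G" and cs: "\<forall>j. (s,j) \<in> G \<longleftrightarrow> j = c"
    and pc: "\<forall>j. (j,c) \<in> G \<longleftrightarrow> j = s" and l: "l \<noteq> 0"
    and m: "inM (G - {(s,c)}) S l w" and ws: "w s = w c / (4 * l^2)"
  shows "inM G (Nx s ((1/(2*l)) *\<^sub>R axis c 1) ** S ** transpose (Nx s ((1/(2*l)) *\<^sub>R axis c 1))) l
           (w(s := w s + (1/(2*l))^2 * w c, c := w c / 4 + l^2 * w s))"
proof -
  let ?G' = "G - {(s,c)}"
  let ?a = "1/(2*l)"
  let ?N = "Nx s (?a *\<^sub>R axis c 1)"
  let ?w = "w(s := w s + (1/(2*l))^2 * w c, c := w c / 4 + l^2 * w s)"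
  have sc: "s \<noteq> c" using ps cs by blast
  have hQ: "\<And>i j. Q S (rr ?G' l i) (rr ?G' l j) = (if i = j then w i else 0)"
    and wpos: "\<forall>i. 0 < w i" using m inM_iff by blast+
  have r1: "\<And>i. i \<noteq> c \<Longrightarrow> rr G l i = rr ?G' l i" by (auto simp: vec_eq_iff)
  have rs: "rr ?G' l s = axis s 1" using ps by (auto simp: vec_eq_iff axis_def)
  have rc': "rr ?G' l c = axis c 1" using pc sc by (auto simp: vec_eq_iff axis_def)
  have rc: "rr G l c = axis c 1 - l *\<^sub>R axis s 1" using pc sc by (auto simp: vec_eq_iff axis_def)
  have ts: "transpose ?N *v rr G l s = rr ?G' l s + ?a *\<^sub>R rr ?G' l c"
    unfolding tNx using r1[of s] sc rs rc' by simp
  have tc: "transpose ?N *v rr G l c = (1/2) *\<^sub>R rr ?G' l c - l *\<^sub>R rr ?G' l s"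
    unfolding tNx rc rs rc' using sc l by (simp add: vec_eq_iff axis_def field_simps)
  have to: "\<And>i. i \<noteq> s \<Longrightarrow> i \<noteq> c \<Longrightarrow> transpose ?N *v rr G l i = rr ?G' l i"
    unfolding tNx using r1 cs by auto
  have wc: "w c > 0" using wpos by blast
  have key: "- (l * w s) + ?a * (1/2) * w c = 0" using ws l by (simp add: field_simps power2_eq_square)
  show ?thesis unfolding inM_iff QN
  proof (intro conjI allI)
    fix i
    have "0 < w s + (1/(2*l))^2 * w c" "0 < w c / 4 + l^2 * w s"
      using wpos by (simp_all add: add_pos_nonneg less_imp_le)
    then show "0 < ?w i" using wpos by (simp del: transpose_matrix_vector)
  next
    fix i j
    show "Q S (transpose ?N *v rr G l i) (transpose ?N *v rr G l j) = (if i = j then ?w i else 0)"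
    proof -
      consider "i = s" | "i = c" | "i \<noteq> s \<and> i \<noteq> c" by blast
      then show ?thesis
      proof cases
        case 1
        consider "j = s" | "j = c" | "j \<noteq> s \<and> j \<noteq> c" by blast
        then show ?thesis
        proof cases
          case 1 then show ?thesis using \<open>i = s\<close> ts hQ sc by (simp del: transpose_matrix_vector add: power2_eq_square)
        next
          case 2 then show ?thesis using hQ sc key
            by (simp only: \<open>i = s\<close> 2 ts tc) (simp del: transpose_matrix_vector add: algebra_simps)
        next
          case 3 then have "transpose ?N *v rr G l j = rr ?G' l j" using to by blast
          then show ?thesis using hQ sc 3 by (simp only: \<open>i = s\<close> ts) (auto simp del: transpose_matrix_vector)
        qed
      next
        case 2
        consider "j = s" | "j = c" | "j \<noteq> s \<and> j \<noteq> c" by blast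
        then show ?thesis
        proof cases
          case 1 then show ?thesis using hQ sc key
            by (simp only: \<open>i = c\<close> 1 ts tc) (simp del: transpose_matrix_vector add: algebra_simps)
        next
          case 2 then show ?thesis using hQ sc
            by (simp only: \<open>i = c\<close> 2 tc) (simp del: transpose_matrix_vector add: power2_eq_square algebra_simps)
        next
          case 3 then have "transpose ?N *v rr G l j = rr ?G' l j" using to by blast
          then show ?thesis using hQ sc 3 by (simp only: \<open>i = c\<close> tc) (auto simp del: transpose_matrix_vector)
        qed
      next
        case 3
        consider "j = s" | "j = c" | "j \<noteq> s \<and> j \<noteq> c" by blast
        then show ?thesis
        proof cases
          case 1 have "transpose ?N *v rr G l i = rr ?G' l i" using to 3 by blast
          then show ?thesis using hQ sc 3 by (simp only: 1 ts) (auto simp del: transpose_matrix_vector)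
        next
          case 2 have "transpose ?N *v rr G l i = rr ?G' l i" using to 3 by blast
          then show ?thesis using hQ sc 3 by (simp only: 2 tc) (auto simp del: transpose_matrix_vector)
        next
          case 4: 3 have "transpose ?N *v rr G l i = rr ?G' l i" "transpose ?N *v rr G l j = rr ?G' l j"
            using to 3 4 by blast+
          then show ?thesis using hQ 3 4 by (simp del: transpose_matrix_vector)
        qed
      qed
    qed
  qed
qed

lemma PL:
  fixes G :: "('n::finite \<times> 'n) set"
  assumes m: "inM G S l w" and pa: "\<forall>k. (k,a) \<notin> G" and pb: "\<forall>k. (k,b) \<in> G \<longleftrightarrow> k = a"
  shows "S$a$a = w a \<and> S$a$b = l * w a \<and> S$b$a = l * w a \<and> S$b$b = w b + l^2 * w a"
proof -
  have ab: "a \<noteq> b" using pa pb by blast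
  have hQ: "\<And>i j. Q S (rr G l i) (rr G l j) = (if i = j then w i else 0)" using m inM_iff by blast
  have ra: "axis a 1 = rr G l a" using pa by (auto simp: vec_eq_iff axis_def)
  have rb: "axis b 1 = rr G l b + l *\<^sub>R rr G l a" using pa pb ab by (auto simp: vec_eq_iff axis_def)
  show ?thesis unfolding Q_axis[symmetric] ra rb using hQ ab by (simp add: power2_eq_square)
qed

lemma bridge:
  fixes E :: "('n::finite \<times> 'n) set"
  assumes ac: "acyclic E" and col: "\<forall>e\<in>E. \<forall>f\<in>E. c e = c f"
  shows "colored_model E c = Mod E"
proof
  show "colored_model E c \<subseteq> Mod E"
  proof
    fix S assume "S \<in> colored_model E c"
    then obtain L w where S: "S = transpose (matrix_inv (mat 1 - L)) ** diag_mat w ** matrix_inv (mat 1 - L)"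
      and w: "\<forall>i. w i > 0" and L0: "\<forall>i j. (i, j) \<notin> E \<longrightarrow> L $ i $ j = 0"
      and Le: "\<forall>e\<in>E. \<forall>f\<in>E. c e = c f \<longrightarrow> L $ fst e $ snd e = L $ fst f $ snd f"
      unfolding colored_model_def by blast
    define e0 where "e0 = (SOME e. e \<in> E)"
    define l where "l = L $ fst e0 $ snd e0"
    have Lij: "\<And>i j. L $ i $ j = (if (i,j) \<in> E then l else 0)"
    proof -
      fix i j
      show "L $ i $ j = (if (i,j) \<in> E then l else 0)"
      proof (cases "(i,j) \<in> E")
        case True
        have e0: "e0 \<in> E" unfolding e0_def using True by (metis someI)
        have "L $ fst (i,j) $ snd (i,j) = L $ fst e0 $ snd e0"
          using Le True e0 col by blast
        then show ?thesis using True unfolding l_def by simp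
      next
        case False then show ?thesis using L0 by simp
      qed
    qed
    have "L = l *\<^sub>R adj E" by (simp add: vec_eq_iff adj_def Lij)
    then have "mat 1 - L = TT E l" by (simp add: TT_def)
    then have "inM E S l w" using exist_elem[OF ac w, of l] S by simp
    then show "S \<in> Mod E" unfolding Mod_def by blast
  qed
next
  show "Mod E \<subseteq> colored_model E c"
  proof
    fix S assume "S \<in> Mod E"
    then obtain l w where m: "inM E S l w" unfolding Mod_def by blast
    let ?T = "TT E l" let ?Ti = "matrix_inv ?T"
    have inv: "invertible ?T" using TT_invertible[OF ac] .
    have eq: "transpose ?T ** S ** ?T = diag_mat w" and w: "\<forall>i. w i > 0" using m inM_def by blast+
    have t1: "transpose ?Ti ** transpose ?T = mat 1"
      by (metis matrix_transpose_mul matrix_inv_props(1)[OF inv] transpose_mat)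
    have "transpose ?Ti ** diag_mat w ** ?Ti = transpose ?Ti ** (transpose ?T ** S ** ?T) ** ?Ti"
      using eq by simp
    also have "\<dots> = ((transpose ?Ti ** transpose ?T) ** S) ** (?T ** ?Ti)"
      by (simp add: matrix_mul_assoc)
    also have "\<dots> = S" using t1 matrix_inv_props(1)[OF inv] by simp
    finally have S: "S = transpose (matrix_inv (mat 1 - l *\<^sub>R adj E)) ** diag_mat w ** matrix_inv (mat 1 - l *\<^sub>R adj E)"
      by (simp add: TT_def)
    have h1: "\<forall>i j. (i,j) \<notin> E \<longrightarrow> (l *\<^sub>R adj E) $ i $ j = 0" by (simp add: adj_def)
    have h2: "\<forall>e\<in>E. \<forall>f\<in>E. c e = c f \<longrightarrow> (l *\<^sub>R adj E) $ fst e $ snd e = (l *\<^sub>R adj E) $ fst f $ snd f"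
      by (simp add: adj_def)
    show "S \<in> colored_model E c" unfolding colored_model_def
      using S w h1 h2 by blast
  qed
qed


lemma SR:
  fixes G1 G2 :: "('n::finite \<times> 'n) set"
  assumes ac1: "acyclic G1" and ac2: "acyclic G2" and m1: "inM G1 S l w" and m2: "inM G2 S m v"
    and s1: "\<forall>j. (t,j) \<notin> G1" and s2: "\<forall>j. (t,j) \<notin> G2"
  shows "(if (j,t) \<in> G1 then l else 0) = (if (j,t) \<in> G2 then m else 0)"
proof -
  have w: "w t > 0" "v t > 0" using m1 m2 inM_def by blast+
  have a: "S *v rr G1 l t = w t *\<^sub>R axis t 1" using SL[OF ac1 m1 s1] .
  have b: "S *v rr G2 m t = v t *\<^sub>R axis t 1" using SL[OF ac2 m2 s2] .
  have "S *v (v t *\<^sub>R rr G1 l t) = S *v (w t *\<^sub>R rr G2 m t)"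
    using a b by (simp add: matrix_vector_mult_scaleR)
  then have e: "v t *\<^sub>R rr G1 l t = w t *\<^sub>R rr G2 m t" using S_inj2[OF ac1 m1] by blast
  have tt: "(t,t) \<notin> G1" "(t,t) \<notin> G2" using acyc_irrefl[OF ac1] acyc_irrefl[OF ac2] by auto
  have "v t * rr G1 l t $ t = w t * rr G2 m t $ t"
    using arg_cong[OF e, of "\<lambda>x. x $ t"] by simp
  then have vt: "v t = w t" using tt by simp
  have "rr G1 l t = rr G2 m t" using e w(1) unfolding vt by (simp add: scaleR_cancel_left)
  then have "rr G1 l t $ j = rr G2 m t $ j" by (rule arg_cong)
  then show ?thesis using tt by (cases "j = t") auto
qed

lemma LLcore:
  fixes E F :: "('n::finite \<times> 'n) set"
  assumes acE: "acyclic E" and acF: "acyclic F" and mE: "inM E S l w" and mF: "inM F S m v"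
    and sink: "\<forall>j. (s,j) \<notin> F"
  shows "\<exists>k. \<forall>j. j \<noteq> s \<longrightarrow> yv E l w s $ j = (if (j,s) \<in> F then k else 0)"
proof -
  have vs: "v s > 0" using mF inM_def by blast
  have "S *v rr F m s = S *v (v s *\<^sub>R yv E l w s)"
    using SL[OF acF mF sink] REG[OF acE mE] by (simp add: matrix_vector_mult_scaleR)
  then have e: "rr F m s = v s *\<^sub>R yv E l w s" using S_inj2[OF acE mE] by blast
  show ?thesis
  proof (intro exI allI impI)
    fix j assume "j \<noteq> s"
    then have "- (if (j,s) \<in> F then m else 0) = v s * yv E l w s $ j"
      using arg_cong[OF e, of "\<lambda>x. x $ j"] by simp
    then show "yv E l w s $ j = (if (j,s) \<in> F then - m / v s else 0)"
      using vs by (cases "(j,s) \<in> F") (auto simp: field_simps)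
  qed
qed

lemma yv_formula:
  fixes E :: "('n::finite \<times> 'n) set"
  assumes "j \<noteq> s" "(j,j) \<notin> E" "(s,s) \<notin> E"
  shows "yv E l w s $ j = - (if (s,j) \<in> E then l / w j else 0) - (if (j,s) \<in> E then l / w s else 0)
     + (\<Sum>i\<in>UNIV. if (j,i) \<in> E \<and> (s,i) \<in> E then l^2 / w i else 0)"
proof -
  have t: "\<And>i. TT E l $ j $ i * (TT E l $ s $ i / w i) =
     - (if i = j then (if (s,j) \<in> E then l / w j else 0) else 0)
     - (if i = s then (if (j,s) \<in> E then l / w s else 0) else 0)
     + (if (j,i) \<in> E \<and> (s,i) \<in> E then l^2 / w i else 0)"
    using assms by (auto simp: field_simps power2_eq_square)
  have "yv E l w s $ j = (\<Sum>i\<in>UNIV. TT E l $ j $ i * (TT E l $ s $ i / w i))"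
    by (simp add: yv_def matrix_vector_mult_def)
  also have "\<dots> = (\<Sum>i\<in>UNIV. - (if i = j then (if (s,j) \<in> E then l / w j else 0) else 0)
     - (if i = s then (if (j,s) \<in> E then l / w s else 0) else 0)
     + (if (j,i) \<in> E \<and> (s,i) \<in> E then l^2 / w i else 0))"
    by (simp only: t)
  also have "\<dots> = - (if (s,j) \<in> E then l / w j else 0) - (if (j,s) \<in> E then l / w s else 0)
     + (\<Sum>i\<in>UNIV. if (j,i) \<in> E \<and> (s,i) \<in> E then l^2 / w i else 0)"
    by (simp add: sum.distrib sum_subtractf sum_negf)
  finally show ?thesis .
qed


lemma sum_ind_card: fixes P :: "'n::finite \<Rightarrow> bool" shows "(\<Sum>i\<in>UNIV. if P i then (1::real) else 0) = real (card {i. P i})"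
proof -
  have "(\<Sum>i\<in>{i\<in>UNIV. P i}. (1::real)) = (\<Sum>i\<in>UNIV. if P i then (1::real) else 0)"
    by (rule sum.inter_filter) simp
  then show ?thesis by simp
qed

lemma acyc_2: "acyclic G \<Longrightarrow> (a,b) \<in> G \<Longrightarrow> (b,a) \<notin> G"
  unfolding acyclic_def by (meson trancl.trancl_into_trancl r_into_trancl)

lemma LL:
  fixes E F :: "('n::finite \<times> 'n) set"
  assumes acE: "acyclic E" and acF: "acyclic F" and sub: "Mod E \<subseteq> Mod F"
    and sinkF: "\<forall>j. (s,j) \<notin> F" and sc: "(s,c) \<in> E"
  shows "(\<forall>j. (j,s) \<notin> E) \<and> (\<forall>j. (s,j) \<in> E \<longrightarrow> j = c) \<and> (\<forall>j. (j,c) \<in> E \<longrightarrow> j = s)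
         \<and> (\<forall>j. (j,s) \<in> F \<longleftrightarrow> j = c)"
proof -
  define n where "n = real CARD('n)"
  define D where "D = 2*n + 3"
  define w where "w = (\<lambda>i. if i = c then 1/D else (1::real))"
  define N where "N = (\<lambda>j. real (card {i. (j,i) \<in> E \<and> (s,i) \<in> E \<and> i \<noteq> c}))"
  have n0: "n \<ge> 0" unfolding n_def by simp
  have Dpos: "D > 0" unfolding D_def using n0 by simp
  have wpos: "\<forall>i. 0 < w i" unfolding w_def using Dpos by simp
  have Nb: "\<And>j. 0 \<le> N j \<and> N j \<le> n"
  proof -
    fix j
    have "card {i. (j,i) \<in> E \<and> (s,i) \<in> E \<and> i \<noteq> c} \<le> card (UNIV :: 'n set)"
      by (rule card_mono) auto
    then show "0 \<le> N j \<and> N j \<le> n" unfolding N_def n_def by simp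
  qed
  have irr: "\<And>x. (x,x) \<notin> E" using acyc_irrefl[OF acE] by blast
  have cs: "c \<noteq> s" using sc irr by blast
  have ncs: "(c,s) \<notin> E" using acyc_2[OF acE sc] .
  have Y: "\<And>l j. j \<noteq> s \<Longrightarrow> yv E l w s $ j =
      - l * (if (s,j) \<in> E then (if j = c then D else 1) else 0) - l * (if (j,s) \<in> E then 1 else 0)
      + l^2 * (N j + (if (j,c) \<in> E then D else 0))"
  proof -
    fix l j assume js: "j \<noteq> s"
    have t: "\<And>i. (if (j,i) \<in> E \<and> (s,i) \<in> E then l^2 / w i else 0) =
       l^2 * ((if (j,i) \<in> E \<and> (s,i) \<in> E \<and> i \<noteq> c then 1 else 0)
              + (if i = c then (if (j,c) \<in> E then D else 0) else 0))"
      using sc Dpos by (auto simp: w_def)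
    have su: "(\<Sum>i\<in>UNIV. if (j,i) \<in> E \<and> (s,i) \<in> E then l^2 / w i else 0)
        = l^2 * (N j + (if (j,c) \<in> E then D else 0))"
      by (simp only: t sum_distrib_left[symmetric] sum.distrib sum_ind_card N_def) simp
    show "yv E l w s $ j =
      - l * (if (s,j) \<in> E then (if j = c then D else 1) else 0) - l * (if (j,s) \<in> E then 1 else 0)
      + l^2 * (N j + (if (j,c) \<in> E then D else 0))"
      unfolding yv_formula[OF js irr irr] su using cs Dpos by (simp add: w_def)
  qed
  have K: "\<And>l. \<exists>k. \<forall>j. j \<noteq> s \<longrightarrow> yv E l w s $ j = (if (j,s) \<in> F then k else 0)"
  proof -
    fix l
    let ?S = "transpose (matrix_inv (TT E l)) ** diag_mat w ** matrix_inv (TT E l)"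
    have mE: "inM E ?S l w" using exist_elem[OF acE wpos] .
    then have "?S \<in> Mod F" using sub unfolding Mod_def by blast
    then obtain m v where mF: "inM F ?S m v" unfolding Mod_def by blast
    show "\<exists>k. \<forall>j. j \<noteq> s \<longrightarrow> yv E l w s $ j = (if (j,s) \<in> F then k else 0)"
      using LLcore[OF acE acF mE mF sinkF] .
  qed
  obtain k1 where k1: "\<And>j. j \<noteq> s \<Longrightarrow> yv E 1 w s $ j = (if (j,s) \<in> F then k1 else 0)"
    using K[of 1] by blast
  obtain k2 where k2: "\<And>j. j \<noteq> s \<Longrightarrow> yv E 2 w s $ j = (if (j,s) \<in> F then k2 else 0)"
    using K[of 2] by blast
  have y1c: "yv E 1 w s $ c = - D + N c" using Y[OF cs, of 1] sc ncs irr by simp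
  have y2c: "yv E 2 w s $ c = - 2 * D + 4 * N c" using Y[OF cs, of 2] sc ncs irr by simp
  have y1cneg: "- D + N c < 0" using Nb[of c] unfolding D_def by simp
  have y2cneg: "- 2 * D + 4 * N c < 0" using Nb[of c] unfolding D_def by simp
  have csF: "(c,s) \<in> F" using k1[OF cs] y1c y1cneg by (cases "(c,s) \<in> F") auto
  have k1v: "k1 = - D + N c" using k1[OF cs] y1c csF by simp
  have k2v: "k2 = - 2 * D + 4 * N c" using k2[OF cs] y2c csF by simp
  have other: "\<And>j. j \<noteq> s \<Longrightarrow> j \<noteq> c \<Longrightarrow>
      (j,c) \<notin> E \<and> (s,j) \<notin> E \<and> (j,s) \<notin> E \<and> (j,s) \<notin> F"
  proof -
    fix j assume js: "j \<noteq> s" and jc: "j \<noteq> c"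
    have y1: "yv E 1 w s $ j = - (if (s,j) \<in> E then 1 else 0) - (if (j,s) \<in> E then 1 else 0)
        + (N j + (if (j,c) \<in> E then D else 0))" using Y[OF js, of 1] jc by simp
    have y2: "yv E 2 w s $ j = - 2 * (if (s,j) \<in> E then 1 else 0) - 2 * (if (j,s) \<in> E then 1 else 0)
        + 4 * (N j + (if (j,c) \<in> E then D else 0))" using Y[OF js, of 2] jc by simp
    have c1: "(j,c) \<notin> E"
    proof
      assume a: "(j,c) \<in> E"
      have "yv E 1 w s $ j \<ge> -2 + N j + D" using y1 a by auto
      moreover have "-2 + N j + D > 0" using Nb[of j] n0 unfolding D_def by simp
      moreover have "yv E 1 w s $ j \<le> 0" using k1[OF js] k1v y1cneg by auto
      ultimately show False by simp
    qed
    have c2: "(s,j) \<notin> E \<and> (j,s) \<notin> E"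
    proof (rule ccontr)
      assume "\<not> ((s,j) \<notin> E \<and> (j,s) \<notin> E)"
      then have one: "(s,j) \<in> E \<or> (j,s) \<in> E" by blast
      have nb: "\<not> ((s,j) \<in> E \<and> (j,s) \<in> E)" using acyc_2[OF acE] by blast
      have e1: "yv E 1 w s $ j = -1 + N j" using y1 one nb c1 by auto
      have e2: "yv E 2 w s $ j = -2 + 4 * N j" using y2 one nb c1 by auto
      have "-1 + N j \<noteq> k1" using k1v Nb[of j] Nb[of c] unfolding D_def by simp
      then have "-1 + N j = 0" using k1[OF js] e1 by (cases "(j,s) \<in> F") auto
      then have "N j = 1" by simp
      then have "yv E 2 w s $ j = 2" using e2 by simp
      then show False using k2[OF js] k2v y2cneg by (cases "(j,s) \<in> F") auto
    qed
    have c3: "(j,s) \<notin> F"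
    proof
      assume a: "(j,s) \<in> F"
      have "yv E 1 w s $ j = N j" using y1 c1 c2 by simp
      then show False using k1[OF js] a k1v y1cneg Nb[of j] by simp
    qed
    show "(j,c) \<notin> E \<and> (s,j) \<notin> E \<and> (j,s) \<notin> E \<and> (j,s) \<notin> F" using c1 c2 c3 by blast
  qed
  have irrF: "\<And>x. (x,x) \<notin> F" using acyc_irrefl[OF acF] by blast
  show ?thesis
  proof (intro conjI allI impI)
    fix j show "(j,s) \<notin> E" using other[of j] irr ncs by (cases "j = s"; cases "j = c") auto
  next
    fix j assume "(s,j) \<in> E" then show "j = c" using other[of j] irr by (cases "j = s") auto
  next
    fix j assume "(j,c) \<in> E" then show "j = s" using other[of j] irr by (cases "j = c") auto
  next
    fix j show "(j,s) \<in> F \<longleftrightarrow> j = c" using other[of j] irrF csF by (cases "j = s") auto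
  qed
qed


lemma get_elem:
  fixes G H :: "('n::finite \<times> 'n) set"
  assumes "acyclic G" "Mod G \<subseteq> Mod H" "\<forall>i. 0 < w i"
  shows "\<exists>S m v. inM G S l w \<and> inM H S m v"
proof -
  let ?S = "transpose (matrix_inv (TT G l)) ** diag_mat w ** matrix_inv (TT G l)"
  have m: "inM G ?S l w" using exist_elem[OF assms(1) assms(3)] .
  then have "?S \<in> Mod H" using assms(2) unfolding Mod_def by blast
  then show ?thesis using m unfolding Mod_def by blast
qed

lemma exists_sink:
  fixes G :: "('n::finite \<times> 'n) set"
  assumes ac: "acyclic G" and ne: "G \<noteq> {}"
  shows "\<exists>s k. (k,s) \<in> G \<and> (\<forall>j. (s,j) \<notin> G)"
proof -
  have wf: "wf (G\<inverse>)" using finite_acyclic_wf[of "G\<inverse>"] ac by (simp add: acyclic_converse)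
  obtain x where x: "x \<in> Range G" using ne by auto
  have "\<exists>z\<in>Range G. \<forall>y. (y, z) \<in> G\<inverse> \<longrightarrow> y \<notin> Range G"
    using wf_eq_minimal[THEN iffD1, OF wf, rule_format, OF x] .
  then obtain z where z: "z \<in> Range G" and zm: "\<forall>y. (y, z) \<in> G\<inverse> \<longrightarrow> y \<notin> Range G"
    by blast
  obtain k where "(k,z) \<in> G" using z by auto
  moreover have "\<forall>j. (z,j) \<notin> G" using zm by auto
  ultimately show ?thesis by blast
qed

lemma peel_sink:
  fixes E F :: "('n::finite \<times> 'n) set"
  assumes acE: "acyclic E" and acF: "acyclic F" and sub: "Mod E \<subseteq> Mod F"
    and sE: "\<forall>j. (s,j) \<notin> E" and sF: "\<forall>j. (s,j) \<notin> F"
  shows "Mod {p\<in>E. snd p \<noteq> s} \<subseteq> Mod {p\<in>F. snd p \<noteq> s}"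
proof
  fix S' assume "S' \<in> Mod {p\<in>E. snd p \<noteq> s}"
  then obtain l w where m: "inM {p\<in>E. snd p \<noteq> s} S' l w" unfolding Mod_def by blast
  let ?N = "Nx s (l *\<^sub>R (\<chi> k. if (k,s)\<in>E then 1 else 0))"
  have mE: "inM E (?N ** S' ** transpose ?N) l w" using ES[OF acE sE m] .
  then have "?N ** S' ** transpose ?N \<in> Mod F" using sub unfolding Mod_def by blast
  then obtain m' v where mF: "inM F (?N ** S' ** transpose ?N) m' v" unfolding Mod_def by blast
  have wpos: "0 < w s" using m inM_def by blast
  have r: "inM {p\<in>F. snd p \<noteq> s} (iso s (w s) (?N ** S' ** transpose ?N)) m' (v(s := w s))"
    using RS[OF mF sF wpos] .
  have acE': "acyclic {p\<in>E. snd p \<noteq> s}" by (rule acyclic_subset[OF acE]) auto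
  have "iso s (w s) (?N ** S' ** transpose ?N) = S'"
    unfolding iso_Nx using iso_isolated[OF acE' m] sE by auto
  then show "S' \<in> Mod {p\<in>F. snd p \<noteq> s}" using r unfolding Mod_def by auto
qed

lemma TT0: "TT G 0 = mat 1" by (simp add: TT_def)

lemma peel_B1:
  fixes E F :: "('n::finite \<times> 'n) set"
  assumes acE: "acyclic E" and acF: "acyclic F" and sub: "Mod E \<subseteq> Mod F"
    and ps: "\<forall>j. (j,s) \<notin> E" and cs: "\<forall>j. (s,j) \<in> E \<longleftrightarrow> j = c"
    and pc: "\<forall>j. (j,c) \<in> E \<longleftrightarrow> j = s" and sF: "\<forall>j. (s,j) \<notin> F"
  shows "Mod (E - {(s,c)}) \<subseteq> Mod {p\<in>F. snd p \<noteq> s}"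
proof
  fix S' assume "S' \<in> Mod (E - {(s,c)})"
  then obtain l w where m: "inM (E - {(s,c)}) S' l w" unfolding Mod_def by blast
  have sc: "s \<noteq> c" using ps cs by blast
  have acE': "acyclic (E - {(s,c)})" by (rule acyclic_subset[OF acE]) auto
  have wpos: "\<forall>i. 0 < w i" using m inM_def by blast
  have isoS': "iso s (w s) S' = S'" using iso_isolated[OF acE' m] ps cs by auto
  show "S' \<in> Mod {p\<in>F. snd p \<noteq> s}"
  proof (cases "l = 0")
    case True
    have "inM E S' l w" using m True unfolding inM_def by (simp add: TT0)
    then have "S' \<in> Mod F" using sub unfolding Mod_def by blast
    then obtain m' v where mF: "inM F S' m' v" unfolding Mod_def by blast
    have ws0: "0 < w s" using wpos by blast
    have "inM {p\<in>F. snd p \<noteq> s} (iso s (w s) S') m' (v(s := w s))"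
      by (rule RS[OF mF sF ws0])
    then show ?thesis using isoS' unfolding Mod_def by auto
  next
    case False
    define z where "z = w c / (4 * l^2)"
    have zpos: "0 < z" unfolding z_def using wpos False by simp
    have eq: "{p\<in>E - {(s,c)}. snd p \<noteq> s} = E - {(s,c)}" using ps by auto
    have sE': "\<forall>j. (s,j) \<notin> E - {(s,c)}" using cs by auto
    have m2: "inM (E - {(s,c)}) (iso s z S') l (w(s := z))"
      using RS[OF m sE' zpos] by (simp only: eq)
    have ws: "(w(s := z)) s = (w(s := z)) c / (4 * l^2)" using sc unfolding z_def by simp
    let ?N = "Nx s ((1/(2*l)) *\<^sub>R axis c 1)"
    have mE: "inM E (?N ** iso s z S' ** transpose ?N) l
           ((w(s:=z))(s := (w(s:=z)) s + (1/(2*l))^2 * (w(s:=z)) c, c := (w(s:=z)) c / 4 + l^2 * (w(s:=z)) s))"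
      using ESp[OF ps cs pc False m2 ws] .
    then have "?N ** iso s z S' ** transpose ?N \<in> Mod F" using sub unfolding Mod_def by blast
    then obtain m' v where mF: "inM F (?N ** iso s z S' ** transpose ?N) m' v" unfolding Mod_def by blast
    have ws0: "0 < w s" using wpos by blast
    have r: "inM {p\<in>F. snd p \<noteq> s} (iso s (w s) (?N ** iso s z S' ** transpose ?N)) m' (v(s := w s))"
      by (rule RS[OF mF sF ws0])
    have "iso s (w s) (?N ** iso s z S' ** transpose ?N) = S'"
      unfolding iso_Nx iso_iso using isoS' .
    then show ?thesis using r unfolding Mod_def by auto
  qed
qed

lemma peel_B2:
  fixes E F :: "('n::finite \<times> 'n) set"
  assumes acE: "acyclic E" and acF: "acyclic F" and sub: "Mod F \<subseteq> Mod E"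
    and ps: "\<forall>j. (j,s) \<notin> E" and cs: "\<forall>j. (s,j) \<in> E \<longleftrightarrow> j = c"
    and pc: "\<forall>j. (j,c) \<in> E \<longleftrightarrow> j = s" and sF: "\<forall>j. (s,j) \<notin> F"
  shows "Mod {p\<in>F. snd p \<noteq> s} \<subseteq> Mod (E - {(s,c)})"
proof
  fix S' assume "S' \<in> Mod {p\<in>F. snd p \<noteq> s}"
  then obtain m w where m: "inM {p\<in>F. snd p \<noteq> s} S' m w" unfolding Mod_def by blast
  have acF': "acyclic {p\<in>F. snd p \<noteq> s}" by (rule acyclic_subset[OF acF]) auto
  have wpos: "\<forall>i. 0 < w i" using m inM_def by blast
  have isoS': "iso s (w s) S' = S'" using iso_isolated[OF acF' m] sF by auto
  let ?N = "Nx s (m *\<^sub>R (\<chi> k. if (k,s)\<in>F then 1 else 0))"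
  have mF: "inM F (?N ** S' ** transpose ?N) m w" using ES[OF acF sF m] .
  then have "?N ** S' ** transpose ?N \<in> Mod E" using sub unfolding Mod_def by blast
  then obtain l v where mE: "inM E (?N ** S' ** transpose ?N) l v" unfolding Mod_def by blast
  have ws0: "0 < w s" using wpos by blast
  have r: "inM (E - {(s,c)}) (iso s (w s) (?N ** S' ** transpose ?N)) l (v(s := w s, c := v c + l^2 * v s))"
    by (rule RSp[OF mE ps cs pc ws0])
  have "iso s (w s) (?N ** S' ** transpose ?N) = S'" unfolding iso_Nx using isoS' .
  then show "S' \<in> Mod (E - {(s,c)})" using r unfolding Mod_def by auto
qed


definition PP :: "('n \<times> 'n) set \<Rightarrow> ('n \<times> 'n) set \<Rightarrow> bool" where
  "PP E F \<longleftrightarrow> F = E \<or> (\<exists>a b. E = {(a,b)} \<and> F = {(b,a)})"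

lemma PP_sym: "PP E F \<Longrightarrow> PP F E" by (auto simp: PP_def)

lemma chain3:
  fixes G :: "('n::finite \<times> 'n) set"
  assumes m: "inM G S l w" and px: "\<forall>k. (k,x) \<notin> G" and py: "\<forall>k. (k,y) \<in> G \<longleftrightarrow> k = x"
    and pz: "\<forall>k. (k,z) \<in> G \<longleftrightarrow> k = y"
  shows "S$z$y = l * (w y + l^2 * w x) \<and> S$z$z = w z + l^2 * (w y + l^2 * w x)"
proof -
  have xy: "x \<noteq> y" using px py by blast
  have yz: "y \<noteq> z" using px py pz by metis
  have xz: "x \<noteq> z" using px pz by blast
  have hQ: "\<And>i j. Q S (rr G l i) (rr G l j) = (if i = j then w i else 0)" using m inM_iff by blast
  have ex: "axis x 1 = rr G l x" using px by (auto simp: vec_eq_iff axis_def)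
  have ey: "axis y 1 = rr G l y + l *\<^sub>R rr G l x" using px py xy by (auto simp: vec_eq_iff axis_def)
  have ez: "axis z 1 = rr G l z + l *\<^sub>R rr G l y + l^2 *\<^sub>R rr G l x"
    using px py pz xy yz xz by (auto simp: vec_eq_iff axis_def power2_eq_square)
  show ?thesis unfolding Q_axis[symmetric] ey ez using hQ xy yz xz
    by (simp add: power2_eq_square algebra_simps)
qed

lemma SLcoord:
  fixes G :: "('n::finite \<times> 'n) set"
  assumes ac: "acyclic G" and m: "inM G S l w" and sink: "\<forall>j. (s,j) \<notin> G"
    and ps: "\<forall>k. (k,s) \<in> G \<longleftrightarrow> k = a"
  shows "S$a$s - l * S$a$a = 0"
proof -
  have as: "a \<noteq> s" using ps acyc_irrefl[OF ac] by blast
  have r: "rr G l s = axis s 1 - l *\<^sub>R axis a 1" using ps as by (auto simp: vec_eq_iff axis_def)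
  have "(S *v rr G l s) $ a = 0" using SL[OF ac m sink] as by (simp add: axis_def)
  moreover have "(S *v rr G l s) $ a = S$a$s - l * S$a$a"
    unfolding r by (simp add: matrix_vector_mult_diff_distrib matrix_vector_mult_scaleR
        matrix_vector_mult_basis column_def)
  ultimately show ?thesis by simp
qed

lemma caseA:
  fixes E F :: "('n::finite \<times> 'n) set"
  assumes IH: "\<And>(E'::('n \<times> 'n) set) F'. card E' + card F' < card E + card F \<Longrightarrow> acyclic E' \<Longrightarrow> acyclic F'
                 \<Longrightarrow> Mod E' = Mod F' \<Longrightarrow> PP E' F'"
    and acE: "acyclic E" and acF: "acyclic F" and eq: "Mod E = Mod F"
    and kF: "(k,s) \<in> F" and sF: "\<forall>j. (s,j) \<notin> F" and sE: "\<forall>j. (s,j) \<notin> E"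
  shows "PP E F"
proof -
  let ?w1 = "\<lambda>i::'n. 1::real"
  have w1: "\<forall>i. 0 < ?w1 i" by simp
  have "\<exists>S m v. inM F S 1 ?w1 \<and> inM E S m v" by (rule get_elem) (use acF eq in auto)
  then obtain S m v where mF: "inM F S 1 ?w1" and mE: "inM E S m v" by blast
  have sr: "\<And>j. (if (j,s) \<in> E then m else 0) = (if (j,s) \<in> F then 1 else 0)"
    using SR[OF acE acF mE mF sE sF] .
  have kE: "(k,s) \<in> E" and m1: "m = 1" using sr[of k] kF by (auto split: if_splits)
  have pa: "\<And>j. (j,s) \<in> E \<longleftrightarrow> (j,s) \<in> F" using sr m1 by (metis zero_neq_one)
  define E' where "E' = {p\<in>E. snd p \<noteq> s}"
  define F' where "F' = {p\<in>F. snd p \<noteq> s}"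
  have acE': "acyclic E'" unfolding E'_def by (rule acyclic_subset[OF acE]) auto
  have acF': "acyclic F'" unfolding F'_def by (rule acyclic_subset[OF acF]) auto
  have eq': "Mod E' = Mod F'" unfolding E'_def F'_def
    using peel_sink[OF acE acF _ sE sF] peel_sink[OF acF acE _ sF sE] eq by blast
  have ps: "F' \<subset> F" unfolding F'_def using kF by (metis (mono_tags, lifting) mem_Collect_eq psubsetI snd_conv subsetI)
  have c1: "card F' < card F" by (rule psubset_card_mono[OF _ ps]) simp
  have c2: "card E' \<le> card E" unfolding E'_def by (rule card_mono) auto
  have "card E' + card F' < card E + card F" using c1 c2 by linarith
  then have pp: "PP E' F'" using IH acE' acF' eq' by blast
  have irr: "\<And>x. (x,x) \<notin> E" using acyc_irrefl[OF acE] by blast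
  have inE: "\<And>x y. y \<noteq> s \<Longrightarrow> (x,y) \<in> E \<longleftrightarrow> (x,y) \<in> E'" unfolding E'_def by simp
  have inF: "\<And>x y. y \<noteq> s \<Longrightarrow> (x,y) \<in> F \<longleftrightarrow> (x,y) \<in> F'" unfolding F'_def by simp
  show ?thesis
  proof (cases "F' = E'")
    case True
    have "F = E"
    proof (rule set_eqI)
      fix p :: "'n \<times> 'n"
      obtain x y where p: "p = (x,y)" by (cases p)
      show "p \<in> F \<longleftrightarrow> p \<in> E"
      proof (cases "y = s")
        case True then show ?thesis using pa p by simp
      next
        case False
        show ?thesis using inE[OF False] inF[OF False] \<open>F' = E'\<close> p by simp
      qed
    qed
    then show ?thesis by (simp add: PP_def)
  next
    case False
    have "\<exists>a b. E' = {(a,b)} \<and> F' = {(b,a)}" using pp False unfolding PP_def by simp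
    then obtain a b where Ea: "E' = {(a,b)}" and Fb: "F' = {(b,a)}" by (elim exE conjE)
    have "(a,b) \<in> E'" using Ea by simp
    then have abE: "(a,b) \<in> E" and bs: "b \<noteq> s" unfolding E'_def by auto
    have as: "a \<noteq> s" using abE sE by blast
    have ab: "a \<noteq> b" using abE irr by blast
    have memE: "\<And>x y. y \<noteq> s \<Longrightarrow> (x,y) \<in> E \<longleftrightarrow> (x = a \<and> y = b)"
      using inE Ea by simp
    have memF: "\<And>x y. y \<noteq> s \<Longrightarrow> (x,y) \<in> F \<longleftrightarrow> (x = b \<and> y = a)"
      using inF Fb by simp
    have "\<exists>S m v. inM E S 1 ?w1 \<and> inM F S m v" by (rule get_elem) (use acE eq in auto)
    then obtain S2 m2 v2 where mE2: "inM E S2 1 ?w1" and mF2: "inM F S2 m2 v2" by blast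
    have "(if (k,s) \<in> E then 1 else 0) = (if (k,s) \<in> F then m2 else 0)"
      using SR[OF acE acF mE2 mF2 sE sF] .
    then have m21: "m2 = 1" using kE kF by simp
    have pa1: "\<forall>x. (x,a) \<notin> E" using memE[OF as] ab by simp
    have pb1: "\<forall>x. (x,b) \<in> E \<longleftrightarrow> x = a" using memE[OF bs] by simp
    have PE: "S2$b$a = 1 * 1 \<and> S2$b$b = 1 + 1^2 * 1" using PL[OF mE2 pa1 pb1] by simp
    have pa2: "\<forall>x. (x,b) \<notin> F" using memF[OF bs] ab by simp
    have pb2: "\<forall>x. (x,a) \<in> F \<longleftrightarrow> x = b" using memF[OF as] by simp
    have PF: "S2$b$b = v2 b \<and> S2$b$a = m2 * v2 b" using PL[OF mF2 pa2 pb2] by simp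
    have False using PE PF m21 by (simp, linarith)
    then show ?thesis ..
  qed
qed

lemma caseB:
  fixes E F :: "('n::finite \<times> 'n) set"
  assumes IH: "\<And>(E'::('n \<times> 'n) set) F'. card E' + card F' < card E + card F \<Longrightarrow> acyclic E' \<Longrightarrow> acyclic F'
                 \<Longrightarrow> Mod E' = Mod F' \<Longrightarrow> PP E' F'"
    and acE: "acyclic E" and acF: "acyclic F" and eq: "Mod E = Mod F"
    and sF: "\<forall>j. (s,j) \<notin> F" and sc: "(s,c) \<in> E"
  shows "PP E F"
proof -
  have sub1: "Mod E \<subseteq> Mod F" and sub2: "Mod F \<subseteq> Mod E" using eq by auto
  have LLr: "(\<forall>j. (j,s) \<notin> E) \<and> (\<forall>j. (s,j) \<in> E \<longrightarrow> j = c) \<and> (\<forall>j. (j,c) \<in> E \<longrightarrow> j = s)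
         \<and> (\<forall>j. (j,s) \<in> F \<longleftrightarrow> j = c)" by (rule LL[OF acE acF sub1 sF sc])
  have ps: "\<forall>j. (j,s) \<notin> E" using conjunct1[OF LLr] .
  have chs: "\<forall>j. (s,j) \<in> E \<longrightarrow> j = c" using conjunct1[OF conjunct2[OF LLr]] .
  have pc0: "\<forall>j. (j,c) \<in> E \<longrightarrow> j = s" using conjunct1[OF conjunct2[OF conjunct2[OF LLr]]] .
  have pF: "\<forall>j. (j,s) \<in> F \<longleftrightarrow> j = c" using conjunct2[OF conjunct2[OF conjunct2[OF LLr]]] .
  have cs: "\<forall>j. (s,j) \<in> E \<longleftrightarrow> j = c"
  proof (intro allI iffI)
    fix j assume "(s,j) \<in> E" then show "j = c" using chs by simp
  next
    fix j assume "j = c" then show "(s,j) \<in> E" using sc by simp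
  qed
  have pc: "\<forall>j. (j,c) \<in> E \<longleftrightarrow> j = s"
  proof (intro allI iffI)
    fix j assume "(j,c) \<in> E" then show "j = s" using pc0 by simp
  next
    fix j assume "j = s" then show "(j,c) \<in> E" using sc by simp
  qed
  have irr: "\<And>x. (x,x) \<notin> E" using acyc_irrefl[OF acE] by blast
  have irrF: "\<And>x. (x,x) \<notin> F" using acyc_irrefl[OF acF] by blast
  have scne: "s \<noteq> c" using sc irr by auto
  define E' where "E' = E - {(s,c)}"
  define F' where "F' = {p\<in>F. snd p \<noteq> s}"
  have eq': "Mod E' = Mod F'" unfolding E'_def F'_def
    by (rule equalityI[OF peel_B1[OF acE acF sub1 ps cs pc sF] peel_B2[OF acE acF sub2 ps cs pc sF]])
  have acE': "acyclic E'" unfolding E'_def by (rule acyclic_subset[OF acE]) auto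
  have acF': "acyclic F'" unfolding F'_def by (rule acyclic_subset[OF acF]) auto
  have csF: "(c,s) \<in> F" using pF by simp
  have c1: "card E' < card E" unfolding E'_def by (rule card_Diff1_less[OF _ sc]) simp
  have psF: "F' \<subset> F" unfolding F'_def using csF by (metis (mono_tags, lifting) mem_Collect_eq psubsetI snd_conv subsetI)
  have c2: "card F' < card F" by (rule psubset_card_mono[OF _ psF]) simp
  have "card E' + card F' < card E + card F" using c1 c2 by linarith
  then have pp: "PP E' F'" using IH acE' acF' eq' by blast
  have inE: "\<And>x y. (x,y) \<in> E \<longleftrightarrow> (x,y) \<in> E' \<or> (x = s \<and> y = c)" unfolding E'_def using sc by auto
  have inF: "\<And>x y. (x,y) \<in> F \<longleftrightarrow> (x,y) \<in> F' \<or> (x = c \<and> y = s)" unfolding F'_def using pF by auto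
  have E'1: "\<And>x. (x,s) \<notin> E'" unfolding E'_def using ps by simp
  have E'2: "\<And>y. (s,y) \<notin> E'" unfolding E'_def using cs by simp
  have E'3: "\<And>x. (x,c) \<notin> E'" unfolding E'_def using pc by simp
  have F'1: "\<And>x. (x,s) \<notin> F'" unfolding F'_def by simp
  let ?w1 = "\<lambda>i::'n. 1::real"
  show ?thesis
  proof (cases "F' = E'")
    case True
    show ?thesis
    proof (cases "E' = {}")
      case True2: True
      have "E = {(s,c)}" using inE True2 by auto
      moreover have "F = {(c,s)}" using inF True2 True by auto
      ultimately show ?thesis unfolding PP_def by blast
    next
      case False
      obtain t p where pt: "(p,t) \<in> E'" and tsink: "\<forall>j. (t,j) \<notin> E'"
        using exists_sink[OF acE' False] by blast
      have ts: "t \<noteq> s" using pt E'1 by blast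
      have tc: "t \<noteq> c" using pt E'3 by blast
      have sE: "\<forall>j. (t,j) \<notin> E" using inE tsink ts by simp
      have sFt: "\<forall>j. (t,j) \<notin> F" using inF tsink tc True by simp
      have "\<exists>S m v. inM E S 1 ?w1 \<and> inM F S m v" by (rule get_elem) (use acE sub1 in auto)
      then obtain S m v where mE: "inM E S 1 ?w1" and mF: "inM F S m v" by blast
      have "(if (p,t) \<in> E then 1 else 0) = (if (p,t) \<in> F then m else 0)"
        using SR[OF acE acF mE mF sE sFt] .
      moreover have "(p,t) \<in> E" "(p,t) \<in> F" using pt inE inF True by auto
      ultimately have m1: "m = 1" by simp
      have pa1: "\<forall>x. (x,s) \<notin> E" using ps .
      have pb1: "\<forall>x. (x,c) \<in> E \<longleftrightarrow> x = s" using pc .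
      have PE: "S$c$s = 1 * 1 \<and> S$c$c = 1 + 1^2 * 1" using PL[OF mE pa1 pb1] by simp
      have pa2: "\<forall>x. (x,c) \<notin> F" using inF E'3 True scne by simp
      have pb2: "\<forall>x. (x,s) \<in> F \<longleftrightarrow> x = c" using pF .
      have PF: "S$c$c = v c \<and> S$c$s = m * v c" using PL[OF mF pa2 pb2] by simp
      have False using PE PF m1 by (simp, linarith)
      then show ?thesis ..
    qed
  next
    case False
    have "\<exists>a b. E' = {(a,b)} \<and> F' = {(b,a)}" using pp False unfolding PP_def by simp
    then obtain a b where Ea: "E' = {(a,b)}" and Fb: "F' = {(b,a)}" by (elim exE conjE)
    have memE: "\<And>x y. (x,y) \<in> E \<longleftrightarrow> (x = a \<and> y = b) \<or> (x = s \<and> y = c)" using inE Ea by simp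
    have memF: "\<And>x y. (x,y) \<in> F \<longleftrightarrow> (x = b \<and> y = a) \<or> (x = c \<and> y = s)" using inF Fb by simp
    have bs: "b \<noteq> s" using E'1[of a] Ea by auto
    have as: "a \<noteq> s" using E'2[of b] Ea by auto
    have cb: "c \<noteq> b" using E'3[of a] Ea by auto
    have ab: "a \<noteq> b" using irr[of a] memE by auto
    show ?thesis
    proof (cases "c = a")
      case False
      let ?w2 = "\<lambda>i::'n. if i = c then 2 else 1::real"
      have w2: "\<forall>i. 0 < ?w2 i" by simp
      have "\<exists>S m v. inM E S 1 ?w2 \<and> inM F S m v" by (rule get_elem) (use acE sub1 in auto)
      then obtain S m v where mE: "inM E S 1 ?w2" and mF: "inM F S m v" by blast
      have "\<forall>x. (x,a) \<notin> E" "\<forall>x. (x,b) \<in> E \<longleftrightarrow> x = a"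
        using memE ab False cb by auto
      then have P1: "S$b$a = 1 \<and> S$b$b = 2" using PL[OF mE] False cb by simp
      have "\<forall>x. (x,s) \<notin> E" "\<forall>x. (x,c) \<in> E \<longleftrightarrow> x = s"
        using memE bs scne cb by auto
      then have P2: "S$c$s = 1 \<and> S$c$c = 3" using PL[OF mE] scne by simp
      have "\<forall>x. (x,b) \<notin> F" "\<forall>x. (x,a) \<in> F \<longleftrightarrow> x = b"
        using memF ab bs as by auto
      then have P3: "S$b$b = v b \<and> S$b$a = m * v b" using PL[OF mF] by simp
      have "\<forall>x. (x,c) \<notin> F" "\<forall>x. (x,s) \<in> F \<longleftrightarrow> x = c"
        using memF False scne as by auto
      then have P4: "S$c$c = v c \<and> S$c$s = m * v c" using PL[OF mF] by simp
      have e1: "v b = 2" "S$b$a = 1" "S$b$a = m * v b" using P1 P3 by auto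
      have e2: "v c = 3" "S$c$s = 1" "S$c$s = m * v c" using P2 P4 by auto
      have "1 = 2 * m" using e1 by simp
      moreover have "1 = 3 * m" using e2 by simp
      ultimately have False by linarith
      then show ?thesis ..
    next
      case True
      have "\<exists>S m v. inM E S 1 ?w1 \<and> inM F S m v" by (rule get_elem) (use acE sub1 in auto)
      then obtain S m v where mE: "inM E S 1 ?w1" and mF: "inM F S m v" by blast
      have "\<forall>k. (k,s) \<notin> E" "\<forall>k. (k,a) \<in> E \<longleftrightarrow> k = s" "\<forall>k. (k,b) \<in> E \<longleftrightarrow> k = a"
        using memE True bs ab scne cb by auto
      then have P1: "S$b$a = 2 \<and> S$b$b = 3" using chain3[OF mE] by simp
      have "\<forall>k. (k,s) \<notin> E" "\<forall>k. (k,a) \<in> E \<longleftrightarrow> k = s"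
        using memE True bs ab scne cb by auto
      then have P2: "S$a$s = 1 \<and> S$a$a = 2" using PL[OF mE] by simp
      have "\<forall>x. (x,b) \<notin> F" "\<forall>x. (x,a) \<in> F \<longleftrightarrow> x = b"
        using memF ab bs as True by auto
      then have P3: "S$b$b = v b \<and> S$b$a = m * v b" using PL[OF mF] by simp
      have sFs: "\<forall>j. (s,j) \<notin> F" using sF .
      have "\<forall>k. (k,s) \<in> F \<longleftrightarrow> k = a" using memF True bs as scne by auto
      then have P4: "S$a$s - m * S$a$a = 0" using SLcoord[OF acF mF sFs] by blast
      have e1: "v b = 3" "S$b$a = 2" "S$b$a = m * v b" using P1 P3 by auto
      have e2: "S$a$s = 1" "S$a$a = 2" using P2 by auto
      have "2 = 3 * m" using e1 by simp
      moreover have "1 - m * 2 = 0" using P4 e2 by simp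
      ultimately have False by linarith
      then show ?thesis ..
    qed
  qed
qed


lemma main_ind:
  fixes E F :: "('n::finite \<times> 'n) set"
  shows "acyclic E \<Longrightarrow> acyclic F \<Longrightarrow> Mod E = Mod F \<Longrightarrow> PP E F"
proof (induction "card E + card F" arbitrary: E F rule: less_induct)
  case (less E F)
  have IH: "\<And>(E'::('n \<times> 'n) set) F'. card E' + card F' < card E + card F \<Longrightarrow> acyclic E' \<Longrightarrow> acyclic F'
                 \<Longrightarrow> Mod E' = Mod F' \<Longrightarrow> PP E' F'" using less.hyps by blast
  have IH2: "\<And>(E'::('n \<times> 'n) set) F'. card E' + card F' < card F + card E \<Longrightarrow> acyclic E' \<Longrightarrow> acyclic F'
                 \<Longrightarrow> Mod E' = Mod F' \<Longrightarrow> PP E' F'" using less.hyps by (simp add: add.commute)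
  have acE: "acyclic E" and acF: "acyclic F" and eq: "Mod E = Mod F" using less.prems by auto
  show ?case
  proof (cases "F = {}")
    case False
    obtain s k where kF: "(k,s) \<in> F" and sF: "\<forall>j. (s,j) \<notin> F" using exists_sink[OF acF False] by blast
    show ?thesis
    proof (cases "\<forall>j. (s,j) \<notin> E")
      case True then show ?thesis using caseA[OF IH acE acF eq kF sF True] by blast
    next
      case False then obtain c where sc: "(s,c) \<in> E" by blast
      show ?thesis using caseB[OF IH acE acF eq sF sc] .
    qed
  next
    case True
    show ?thesis
    proof (cases "E = {}")
      case True2: True then show ?thesis using True by (simp add: PP_def)
    next
      case False
      have eq2: "Mod F = Mod E" using eq by simp
      obtain s k where kE: "(k,s) \<in> E" and sE: "\<forall>j. (s,j) \<notin> E" using exists_sink[OF acE False] by blast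
      have "PP F E"
      proof (cases "\<forall>j. (s,j) \<notin> F")
        case True then show ?thesis using caseA[OF IH2 acF acE eq2 kE sE True] by blast
      next
        case False then obtain c where sc: "(s,c) \<in> F" by blast
        show ?thesis using caseB[OF IH2 acF acE eq2 sE sc] .
      qed
      then show ?thesis by (rule PP_sym)
    qed
  qed
qed

theorem theorem5p8:
  fixes E F :: "('n::finite \<times> 'n) set"
    and c :: "'n \<times> 'n \<Rightarrow> 'c" and c' :: "'n \<times> 'n \<Rightarrow> 'd"
  assumes "is_dag E"
    and "\<forall>e\<in>E. \<forall>f\<in>E. c e = c f"
    and "card E \<ge> 2"
    and "is_dag F"
    and "\<forall>e\<in>F. \<forall>f\<in>F. c' e = c' f"
    and "colored_model F c' = colored_model E c"
  shows "F = E"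
proof -
  have acE: "acyclic E" using assms(1) is_dag_def by blast
  have acF: "acyclic F" using assms(4) is_dag_def by blast
  have "Mod E = Mod F" using bridge[OF acE assms(2)] bridge[OF acF assms(5)] assms(6) by simp
  then have pp: "PP E F" using main_ind[OF acE acF] by simp
  show "F = E"
  proof (rule ccontr)
    assume "F \<noteq> E"
    then obtain a b where "E = {(a,b)}" using pp unfolding PP_def by blast
    then show False using assms(3) by simp
  qed
qed


end
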